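(* Assume $t_m=1$ and let $d_\beta^*(1)=(t_1t_2\cdots t_{m-1}0)^\omega$. Let $y\in\mathbb Z_\beta^+$ have β-expansion $y_ny_{n-1}\cdots y_0\bullet$, and let $k$ be the maximal index (with $0\le k\le n+1$) such that the word $y_{k-1}y_{k-2}\cdots y_0$ is a prefix of $d_\beta^*(1)$ (the empty word when $k=0$). Then ${\rm succ}(y)=y+T_\beta^{k'}(1)$, where $k'\in\{0,1,\dots,m-1\}$ satisfies $k'\equiv k\pmod m$.
   Context: $\beta>1$ is a simple Parry number with $d_\beta(1)=t_1\cdots t_{m-1}t_m$ ($m\ge2$, $t_1\ge1$, $t_m\ge1$, satisfying the Parry condition). The β-expansion of $x>0$ is the greedy expansion $x=\sum_{i\le k}x_i\beta^i$; we write $x=x_n\cdots x_0\bullet$ when $x_i=0$ for $i<0$, and such $x$ (together with $0$) form $\mathbb Z_\beta^+$. A finite string $x_k\cdots x_0$ over $\{0,\dots,\lceil\beta\rceil-1\}$ is the β-expansion of a β-integer iff each suffix $x_i\cdots x_0$ is lexicographically strictly smaller than $d_\beta(1)$. $\mathbb Z_\beta=\mathbb Z_\beta^+\cup(-\mathbb Z_\beta^+)$, ${\rm succ}(x)=\min\{y\in\mathbb Z_\beta: y>x\}$. $T_\beta(x)=\beta x\bmod1$ and $T_\beta^i(1)=\sum_{j=i+1}^m t_j\beta^{i-j}$ for $0\le i\le m-1$. *)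

theory Defs
  imports Complex_Main
begin

definition beta_T :: "real \<Rightarrow> real \<Rightarrow> real" where
  "beta_T \<beta> x = frac (\<beta> * x)"

text \<open>Renyi digits of 1: d_beta(1) = t_1 t_2 ..., with t_i = floor(beta T^(i-1)(1)).\<close>
definition renyi_digit :: "real \<Rightarrow> nat \<Rightarrow> nat" where
  "renyi_digit \<beta> i = nat \<lfloor>\<beta> * (beta_T \<beta> ^^ (i - 1)) 1\<rfloor>"

text \<open>beta is a simple Parry number with d_beta(1) of length exactly m.\<close>
definition simple_parry :: "real \<Rightarrow> nat \<Rightarrow> bool" where
  "simple_parry \<beta> m \<longleftrightarrow> \<beta> > 1 \<and> (beta_T \<beta> ^^ m) 1 = 0 \<and>
     (\<forall>i<m. (beta_T \<beta> ^^ i) 1 \<noteq> 0)"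

text \<open>The j-th letter (j \<ge> 1) of d*_beta(1) = (t_1 ... t_(m-1) 0)^omega.\<close>
definition dstar_digit :: "real \<Rightarrow> nat \<Rightarrow> nat \<Rightarrow> nat" where
  "dstar_digit \<beta> m j = (if j mod m = 0 then 0 else renyi_digit \<beta> (j mod m))"

text \<open>ds is the (greedy) beta-expansion y = ds n ... ds 0 (dot) of y, i.e. y is a
  nonnegative beta-integer; leading digit nonzero unless y = 0 (then n = 0).\<close>
definition is_beta_int_expansion :: "real \<Rightarrow> real \<Rightarrow> nat \<Rightarrow> (nat \<Rightarrow> nat) \<Rightarrow> bool" where
  "is_beta_int_expansion \<beta> y n ds \<longleftrightarrow>
     0 \<le> y \<and> y < \<beta> ^ (n + 1) \<and> (ds n \<noteq> 0 \<or> n = 0) \<and>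
     (\<forall>i\<le>n. real (ds i) = of_int \<lfloor>(y - (\<Sum>j\<in>{i<..n}. real (ds j) * \<beta> ^ j)) / \<beta> ^ i\<rfloor>) \<and>
     y = (\<Sum>i\<le>n. real (ds i) * \<beta> ^ i)"

definition Zbeta_plus :: "real \<Rightarrow> real set" where
  "Zbeta_plus \<beta> = {y. \<exists>n ds. is_beta_int_expansion \<beta> y n ds}"

definition Zbeta :: "real \<Rightarrow> real set" where
  "Zbeta \<beta> = Zbeta_plus \<beta> \<union> uminus ` Zbeta_plus \<beta>"

definition beta_succ :: "real \<Rightarrow> real \<Rightarrow> real" where
  "beta_succ \<beta> x = (LEAST z. z \<in> Zbeta \<beta> \<and> x < z)"

end

theory Submission
  imports Defs
begin

definition V :: "real \<Rightarrow> (nat \<Rightarrow> nat) \<Rightarrow> nat \<Rightarrow> real" where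
  "V \<beta> a j = (\<Sum>i<j. real (a i) * \<beta> ^ i)"

definition tau :: "real \<Rightarrow> nat \<Rightarrow> real" where
  "tau \<beta> i = (beta_T \<beta> ^^ i) 1"

lemma V_0[simp]: "V \<beta> a 0 = 0" by (simp add: V_def)
lemma V_Suc: "V \<beta> a (Suc j) = V \<beta> a j + real (a j) * \<beta> ^ j" by (simp add: V_def)
lemma V_nonneg: "\<beta> \<ge> 0 \<Longrightarrow> V \<beta> a j \<ge> 0" unfolding V_def by (intro sum_nonneg) auto

lemma tau_bounds: "tau \<beta> i \<ge> 0 \<and> tau \<beta> i \<le> 1"
proof (cases i)
  case 0 then show ?thesis by (simp add: tau_def)
next
  case (Suc j)
  have "tau \<beta> i = frac (\<beta> * tau \<beta> j)" by (simp add: Suc tau_def beta_T_def)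
  then show ?thesis using frac_lt_1[of "\<beta> * tau \<beta> j"] frac_ge_0[of "\<beta> * tau \<beta> j"] by linarith
qed

lemma tau_step: assumes "\<beta> > 0"
  shows "tau \<beta> (Suc i) = \<beta> * tau \<beta> i - real (renyi_digit \<beta> (Suc i))"
proof -
  have "\<beta> * tau \<beta> i \<ge> 0" using assms tau_bounds[of \<beta> i] by simp
  then have "real (renyi_digit \<beta> (Suc i)) = of_int \<lfloor>\<beta> * tau \<beta> i\<rfloor>"
    by (simp add: renyi_digit_def tau_def)
  moreover have "tau \<beta> (Suc i) = frac (\<beta> * tau \<beta> i)" by (simp add: tau_def beta_T_def)
  ultimately show ?thesis by (simp add: frac_def)
qed

lemma tau_mod:
  assumes sp: "simple_parry \<beta> m" and m: "m \<ge> 2" and r: "renyi_digit \<beta> m = 1"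
  shows "tau \<beta> (Suc l mod m) = \<beta> * tau \<beta> (l mod m) - real (dstar_digit \<beta> m (Suc l))"
proof -
  have b: "\<beta> > 0" using sp by (simp add: simple_parry_def)
  have tm: "tau \<beta> m = 0" using sp by (simp add: simple_parry_def tau_def)
  show ?thesis
  proof (cases "Suc l mod m = 0")
    case True
    then have "l mod m = m - 1" using m
      by (metis diff_Suc_1 mod_Suc nat.distinct(1))
    moreover have "\<beta> * tau \<beta> (m - 1) = 1"
      using tau_step[OF b, of "m - 1"] m tm r by simp
    ultimately show ?thesis using True by (simp add: dstar_digit_def tau_def)
  next
    case False
    then have "Suc l mod m = Suc (l mod m)" by (metis mod_Suc)
    then show ?thesis using False tau_step[OF b, of "l mod m"] by (simp add: dstar_digit_def)
  qed
qed


lemma V_split: assumes "i \<le> n"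
  shows "V \<beta> a (Suc n) - (\<Sum>j\<in>{i<..n}. real (a j) * \<beta> ^ j) = V \<beta> a (Suc i)"
proof -
  have "{..<Suc n} = {..<Suc i} \<union> {i<..n}" using assms by auto
  moreover have "{..<Suc i} \<inter> {i<..n} = {}" by auto
  ultimately have "V \<beta> a (Suc n) = V \<beta> a (Suc i) + (\<Sum>j\<in>{i<..n}. real (a j) * \<beta> ^ j)"
    unfolding V_def by (simp add: sum.union_disjoint)
  then show ?thesis by simp
qed

lemma floor_nat_add: "\<lfloor>real k + (t::real)\<rfloor> = int k + \<lfloor>t\<rfloor>"
proof -
  have "real k + t = t + of_int (int k)" by simp
  then show ?thesis by (simp only: floor_add_int[symmetric])
qed

lemma floor_cond: assumes b: "\<beta> > 1" and "i \<le> n"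
  shows "(real (a i) = of_int \<lfloor>(V \<beta> a (Suc n) - (\<Sum>j\<in>{i<..n}. real (a j) * \<beta> ^ j)) / \<beta> ^ i\<rfloor>)
     \<longleftrightarrow> V \<beta> a i < \<beta> ^ i"
proof -
  have p: "\<beta> ^ i > 0" using b by simp
  have "(V \<beta> a (Suc n) - (\<Sum>j\<in>{i<..n}. real (a j) * \<beta> ^ j)) / \<beta> ^ i = (V \<beta> a i + real (a i) * \<beta> ^ i) / \<beta> ^ i"
    by (subst V_split[OF assms(2)], subst V_Suc, rule refl)
  also have "\<dots> = real (a i) + V \<beta> a i / \<beta> ^ i"
    using p by (simp add: add_divide_distrib del: power_eq_0_iff)
  finally have e0: "(V \<beta> a (Suc n) - (\<Sum>j\<in>{i<..n}. real (a j) * \<beta> ^ j)) / \<beta> ^ i = real (a i) + V \<beta> a i / \<beta> ^ i" .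
  have "\<lfloor>real (a i) + V \<beta> a i / \<beta> ^ i\<rfloor> = int (a i) + \<lfloor>V \<beta> a i / \<beta> ^ i\<rfloor>"
    by (rule floor_nat_add)
  with e0 have e: "\<lfloor>(V \<beta> a (Suc n) - (\<Sum>j\<in>{i<..n}. real (a j) * \<beta> ^ j)) / \<beta> ^ i\<rfloor> = int (a i) + \<lfloor>V \<beta> a i / \<beta> ^ i\<rfloor>"
    by simp
  have nn: "V \<beta> a i / \<beta> ^ i \<ge> 0" using V_nonneg[of \<beta> a i] b p by simp
  have f1: "(\<lfloor>V \<beta> a i / \<beta> ^ i\<rfloor> = 0) \<longleftrightarrow> V \<beta> a i / \<beta> ^ i < 1"
    using nn by (simp add: floor_eq_iff)
  have f2: "V \<beta> a i / \<beta> ^ i < 1 \<longleftrightarrow> V \<beta> a i < \<beta> ^ i"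
    using p by (simp add: pos_divide_less_eq)
  have f3: "(real (a i) = of_int (int (a i) + \<lfloor>V \<beta> a i / \<beta> ^ i\<rfloor>)) \<longleftrightarrow> \<lfloor>V \<beta> a i / \<beta> ^ i\<rfloor> = 0"
    by simp
  show ?thesis using e f3 f1 f2 by presburger
qed

lemma exp_iff:
  assumes b: "\<beta> > 1"
  shows "is_beta_int_expansion \<beta> x n a \<longleftrightarrow>
    (a n \<noteq> 0 \<or> n = 0) \<and> x = V \<beta> a (Suc n) \<and> (\<forall>i \<le> Suc n. V \<beta> a i < \<beta> ^ i)"
proof -
  have sx: "(\<Sum>i\<le>n. real (a i) * \<beta> ^ i) = V \<beta> a (Suc n)"
    by (simp add: V_def lessThan_Suc_atMost)
  show ?thesis
  proof
    assume h: "is_beta_int_expansion \<beta> x n a"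
    have h1: "a n \<noteq> 0 \<or> n = 0" and h2: "x < \<beta> ^ (n + 1)"
      and h3: "\<forall>i\<le>n. real (a i) = of_int \<lfloor>(x - (\<Sum>j\<in>{i<..n}. real (a j) * \<beta> ^ j)) / \<beta> ^ i\<rfloor>"
      and h4: "x = (\<Sum>i\<le>n. real (a i) * \<beta> ^ i)"
      using h unfolding is_beta_int_expansion_def by blast+
    have x: "x = V \<beta> a (Suc n)" using h4 sx by simp
    have "\<forall>i \<le> Suc n. V \<beta> a i < \<beta> ^ i"
    proof (intro allI impI)
      fix i assume i: "i \<le> Suc n"
      show "V \<beta> a i < \<beta> ^ i"
      proof (cases "i = Suc n")
        case True then show ?thesis using h2 x by simp
      next
        case False then have i': "i \<le> n" using i by simp
        have "real (a i) = of_int \<lfloor>(V \<beta> a (Suc n) - (\<Sum>j\<in>{i<..n}. real (a j) * \<beta> ^ j)) / \<beta> ^ i\<rfloor>"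
          using h3 i' x by blast
        then show ?thesis using floor_cond[OF b i', of a] by blast
      qed
    qed
    then show "(a n \<noteq> 0 \<or> n = 0) \<and> x = V \<beta> a (Suc n) \<and> (\<forall>i \<le> Suc n. V \<beta> a i < \<beta> ^ i)"
      using h1 x by blast
  next
    assume h: "(a n \<noteq> 0 \<or> n = 0) \<and> x = V \<beta> a (Suc n) \<and> (\<forall>i \<le> Suc n. V \<beta> a i < \<beta> ^ i)"
    then have x: "x = V \<beta> a (Suc n)" by blast
    have "0 \<le> x" using x V_nonneg[of \<beta> a] b by simp
    moreover have "x < \<beta> ^ (n+1)" using h x by (metis Suc_eq_plus1 order_refl)
    moreover have "\<forall>i\<le>n. real (a i) = of_int \<lfloor>(x - (\<Sum>j\<in>{i<..n}. real (a j) * \<beta> ^ j)) / \<beta> ^ i\<rfloor>"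
    proof (intro allI impI)
      fix i assume i': "i \<le> n"
      have "V \<beta> a i < \<beta> ^ i" using h i' by simp
      then show "real (a i) = of_int \<lfloor>(x - (\<Sum>j\<in>{i<..n}. real (a j) * \<beta> ^ j)) / \<beta> ^ i\<rfloor>"
        using floor_cond[OF b i', of a] x by blast
    qed
    moreover have "x = (\<Sum>i\<le>n. real (a i) * \<beta> ^ i)" using x sx by simp
    ultimately show "is_beta_int_expansion \<beta> x n a"
      using h unfolding is_beta_int_expansion_def by blast
  qed
qed

lemma V_ext: "V \<beta> (\<lambda>i. if i \<le> n then a i else 0) j = V \<beta> a (min j (Suc n))"
proof (induction j)
  case 0 then show ?case by simp
next
  case (Suc j) then show ?case
  proof (cases "j \<le> n")
    case False then have "j = Suc n \<or> j > Suc n" by auto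
    then show ?thesis using Suc False by (auto simp: V_Suc min_def)
  qed (auto simp: V_Suc min_def)
qed

lemma digit_cmp:
  assumes "\<forall>i. V \<beta> a i < \<beta> ^ i" "V \<beta> b N < V \<beta> a N" "\<beta> > 0"
  shows "\<exists>j<N. V \<beta> a N \<ge> V \<beta> b N - V \<beta> b j + \<beta> ^ j"
  using assms(2)
proof (induction N)
  case 0 then show ?case by simp
next
  case (Suc N)
  have p: "\<beta> ^ N > 0" using assms(3) by simp
  show ?case
  proof (cases "a N = b N")
    case True
    then have "V \<beta> b N < V \<beta> a N" using Suc.prems by (simp add: V_Suc)
    then obtain j where "j < N" "V \<beta> a N \<ge> V \<beta> b N - V \<beta> b j + \<beta> ^ j" using Suc.IH by blast
    then show ?thesis using True by (intro exI[of _ j]) (auto simp: V_Suc)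
  next
    case False
    show ?thesis
    proof (cases "a N < b N")
      case True
      then have "real (a N) + 1 \<le> real (b N)" by simp
      then have "real (a N) * \<beta> ^ N + \<beta> ^ N \<le> real (b N) * \<beta> ^ N"
        using p by (metis distrib_right mult_1 mult_right_mono less_imp_le)
      moreover have "V \<beta> a N < \<beta> ^ N" using assms(1) by blast
      moreover have "V \<beta> b N \<ge> 0" using V_nonneg assms(3) by simp
      ultimately have False using Suc.prems by (simp add: V_Suc)
      then show ?thesis ..
    next
      case False2: False
      then have "real (b N) + 1 \<le> real (a N)" using False by simp
      then have "real (b N) * \<beta> ^ N + \<beta> ^ N \<le> real (a N) * \<beta> ^ N"
        using p by (metis distrib_right mult_1 mult_right_mono less_imp_le)
      moreover have "V \<beta> a N \<ge> 0" using V_nonneg assms(3) by simp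
      ultimately show ?thesis by (intro exI[of _ N]) (auto simp: V_Suc)
    qed
  qed
qed

lemma V_inc: "V \<beta> (\<lambda>i. if i < j then 0 else if i = j then b i + 1 else b i) i =
   (if i \<le> j then 0 else V \<beta> b i - V \<beta> b j + \<beta> ^ j)"
proof (induction i)
  case 0 then show ?case by simp
next
  case (Suc i) then show ?case
    by (cases "i < j"; cases "i = j") (auto simp: V_Suc algebra_simps)
qed


lemma ext_val: "Suc n \<le> j \<Longrightarrow> V \<beta> (\<lambda>i. if i \<le> n then a i else 0) j = V \<beta> a (Suc n)"
  by (simp add: V_ext min_def)

lemma ext_val2: "j \<le> Suc n \<Longrightarrow> V \<beta> (\<lambda>i. if i \<le> n then a i else 0) j = V \<beta> a j"
  by (simp add: V_ext min_def)

lemma ext_tails: assumes "\<beta> \<ge> 1" "\<forall>i\<le>Suc n. V \<beta> a i < \<beta> ^ i"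
  shows "V \<beta> (\<lambda>i. if i \<le> n then a i else 0) i < \<beta> ^ i"
proof (cases "i \<le> Suc n")
  case True then show ?thesis using assms ext_val2 by simp
next
  case False
  then have "V \<beta> (\<lambda>i. if i \<le> n then a i else 0) i = V \<beta> a (Suc n)" using ext_val by simp
  also have "\<dots> < \<beta> ^ Suc n" using assms(2) by blast
  also have "\<dots> \<le> \<beta> ^ i" using False assms(1) by (intro power_increasing) auto
  finally show ?thesis .
qed

lemma match:
  assumes sp: "simple_parry \<beta> m" and m: "m \<ge> 2" and r: "renyi_digit \<beta> m = 1"
  shows "p \<le> j \<Longrightarrow> (\<forall>i<p. ds (j-1-i) = dstar_digit \<beta> m (i+1)) \<Longrightarrow>
    \<beta>^j - V \<beta> ds j = \<beta>^(j-p) * tau \<beta> (p mod m) - V \<beta> ds (j-p)"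
proof (induction p)
  case 0 then show ?case by (simp add: tau_def)
next
  case (Suc p)
  define q where "q = j - Suc p"
  have jp: "j - p = Suc q" using Suc.prems q_def by simp
  have IH: "\<beta>^j - V \<beta> ds j = \<beta>^(Suc q) * tau \<beta> (p mod m) - V \<beta> ds (Suc q)"
    using Suc.IH Suc.prems jp by simp
  have "j - 1 - p = q" using q_def by simp
  then have d: "ds q = dstar_digit \<beta> m (Suc p)" using Suc.prems(2) by (metis Suc_eq_plus1 lessI)
  have t: "tau \<beta> (Suc p mod m) = \<beta> * tau \<beta> (p mod m) - real (dstar_digit \<beta> m (Suc p))"
    using tau_mod[OF sp m r] .
  show ?case unfolding IH q_def[symmetric]
    by (simp add: V_Suc t d algebra_simps)
qed

lemma mismatch:
  assumes sp: "simple_parry \<beta> m" and m: "m \<ge> 2" and r: "renyi_digit \<beta> m = 1"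
    and tl: "V \<beta> ds j < \<beta> ^ j" and nm: "\<not> (\<forall>i<j. ds (j-1-i) = dstar_digit \<beta> m (i+1))"
  shows "\<exists>q<j. \<beta>^j - V \<beta> ds j \<ge> \<beta>^q - V \<beta> ds q"
proof -
  have b0: "\<beta> > 0" using sp by (simp add: simple_parry_def)
  define p where "p = (LEAST i. i < j \<and> ds (j-1-i) \<noteq> dstar_digit \<beta> m (i+1))"
  obtain i0 where i0: "i0 < j \<and> ds (j-1-i0) \<noteq> dstar_digit \<beta> m (i0+1)" using nm by blast
  have pp: "p < j \<and> ds (j-1-p) \<noteq> dstar_digit \<beta> m (p+1)"
    unfolding p_def by (rule LeastI[of _ i0]) (rule i0)
  have pm: "\<forall>i<p. ds (j-1-i) = dstar_digit \<beta> m (i+1)"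
  proof (intro allI impI)
    fix i assume "i < p"
    then have "\<not> (i < j \<and> ds (j-1-i) \<noteq> dstar_digit \<beta> m (i+1))"
      unfolding p_def by (rule not_less_Least)
    then show "ds (j-1-i) = dstar_digit \<beta> m (i+1)" using \<open>i < p\<close> pp by auto
  qed
  define q where "q = j - 1 - p"
  have jp: "j - p = Suc q" using pp q_def by linarith
  have e: "\<beta>^j - V \<beta> ds j = \<beta>^(Suc q) * tau \<beta> (p mod m) - V \<beta> ds (Suc q)"
    using match[OF sp m r, of p j ds] pp pm jp by simp
  have t: "tau \<beta> (Suc p mod m) = \<beta> * tau \<beta> (p mod m) - real (dstar_digit \<beta> m (Suc p))"
    using tau_mod[OF sp m r] .
  define c where "c = real (ds q)"
  define d where "d = real (dstar_digit \<beta> m (Suc p))"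
  define tt where "tt = tau \<beta> (Suc p mod m)"
  have e2: "\<beta>^j - V \<beta> ds j = \<beta>^q * (tt + d - c) - V \<beta> ds q"
    unfolding e tt_def t c_def d_def by (simp add: V_Suc algebra_simps)
  have tb: "0 \<le> tt" "tt \<le> 1" using tau_bounds unfolding tt_def by auto
  have pq: "\<beta>^q > 0" using b0 by simp
  have Vq: "V \<beta> ds q \<ge> 0" using V_nonneg b0 by simp
  have cd: "ds q \<noteq> dstar_digit \<beta> m (Suc p)" using pp q_def by simp
  show ?thesis
  proof (cases "ds q < dstar_digit \<beta> m (Suc p)")
    case True
    then have "c + 1 \<le> d" unfolding c_def d_def by simp
    then have "1 \<le> tt + d - c" using tb by simp
    then have "\<beta>^q * 1 \<le> \<beta>^q * (tt + d - c)" using pq by (intro mult_left_mono) auto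
    then have "\<beta>^j - V \<beta> ds j \<ge> \<beta>^q - V \<beta> ds q" using e2 by simp
    moreover have "q < j" using pp q_def by simp
    ultimately show ?thesis by blast
  next
    case False
    then have "d + 1 \<le> c" using cd unfolding c_def d_def by simp
    then have "tt + d - c \<le> 0" using tb by simp
    then have "\<beta>^q * (tt + d - c) \<le> 0" using pq by (simp add: mult_nonneg_nonpos)
    then have "\<beta>^j - V \<beta> ds j \<le> 0" using e2 Vq by simp
    then show ?thesis using tl by simp
  qed
qed

lemma all_ge:
  assumes sp: "simple_parry \<beta> m" and m: "m \<ge> 2" and r: "renyi_digit \<beta> m = 1"
    and tl: "\<forall>i\<le>K. V \<beta> ds i < \<beta> ^ i" and kK: "k \<le> K"
    and Pk: "\<forall>i<k. ds (k-1-i) = dstar_digit \<beta> m (i+1)"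
    and kmax: "\<forall>j\<le>K. (\<forall>i<j. ds (j-1-i) = dstar_digit \<beta> m (i+1)) \<longrightarrow> j \<le> k"
  shows "j \<le> K \<Longrightarrow> \<beta>^j - V \<beta> ds j \<ge> \<beta>^k - V \<beta> ds k"
proof (induction j rule: less_induct)
  case (less j)
  show ?case
  proof (cases "j \<le> k")
    case True
    have "\<beta>^k - V \<beta> ds k = \<beta>^(k-(k-j)) * tau \<beta> ((k-j) mod m) - V \<beta> ds (k-(k-j))"
      using match[OF sp m r, of "k-j" k ds] Pk by simp
    also have "\<dots> = \<beta>^j * tau \<beta> ((k-j) mod m) - V \<beta> ds j" using True by simp
    also have "\<dots> \<le> \<beta>^j * 1 - V \<beta> ds j"
      using tau_bounds[of \<beta> "(k-j) mod m"] sp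
      by (intro diff_right_mono mult_left_mono) (auto simp: simple_parry_def)
    finally show ?thesis by simp
  next
    case False
    then have "\<not> (\<forall>i<j. ds (j-1-i) = dstar_digit \<beta> m (i+1))" using kmax less.prems by auto
    then obtain q where q: "q < j" "\<beta>^j - V \<beta> ds j \<ge> \<beta>^q - V \<beta> ds q"
      using mismatch[OF sp m r, of ds j] tl less.prems by auto
    then have "\<beta>^q - V \<beta> ds q \<ge> \<beta>^k - V \<beta> ds k" using less.IH less.prems by simp
    then show ?thesis using q by simp
  qed
qed


theorem mainTheorem16:
  fixes \<beta> y :: real and m n k :: nat and ds :: "nat \<Rightarrow> nat"
  assumes "simple_parry \<beta> m" and "m \<ge> 2"
    and "renyi_digit \<beta> m = 1"
    and "is_beta_int_expansion \<beta> y n ds"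
    and "k = (GREATEST k. k \<le> n + 1 \<and> (\<forall>i<k. ds (k - 1 - i) = dstar_digit \<beta> m (i + 1)))"
  shows "beta_succ \<beta> y = y + (beta_T \<beta> ^^ (k mod m)) 1"
proof -
  note sp = assms(1) and m = assms(2) and r = assms(3)
  have b1: "\<beta> > 1" using sp by (simp add: simple_parry_def)
  then have b0: "\<beta> > 0" and b1': "\<beta> \<ge> 1" by simp_all
  have lead: "ds n \<noteq> 0 \<or> n = 0" and yV: "y = V \<beta> ds (Suc n)"
    and tl: "\<forall>i\<le>Suc n. V \<beta> ds i < \<beta> ^ i"
    using assms(4) exp_iff[OF b1] by blast+
  have y0: "y \<ge> 0" using yV V_nonneg b0 by simp
  define b where "b = (\<lambda>i. if i \<le> n then ds i else 0)"
  have Vb1: "\<And>j. j \<le> Suc n \<Longrightarrow> V \<beta> b j = V \<beta> ds j" unfolding b_def by (rule ext_val2)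
  have Vb2: "\<And>j. Suc n \<le> j \<Longrightarrow> V \<beta> b j = y" unfolding b_def yV by (rule ext_val)
  have tlb: "\<And>i. V \<beta> b i < \<beta> ^ i" unfolding b_def using ext_tails[OF b1' tl] by blast
  define P where "P j \<longleftrightarrow> (\<forall>i<j. b (j-1-i) = dstar_digit \<beta> m (i+1))" for j
  have Pb: "\<And>j. j \<le> n + 1 \<Longrightarrow> (\<forall>i<j. ds (j - 1 - i) = dstar_digit \<beta> m (i + 1)) \<longleftrightarrow> P j"
    unfolding P_def b_def by auto
  have "(\<lambda>k. k \<le> n + 1 \<and> (\<forall>i<k. ds (k - 1 - i) = dstar_digit \<beta> m (i + 1))) = (\<lambda>k. k \<le> n + 1 \<and> P k)"
  proof (rule ext)
    fix x show "(x \<le> n + 1 \<and> (\<forall>i<x. ds (x - 1 - i) = dstar_digit \<beta> m (i + 1))) = (x \<le> n + 1 \<and> P x)"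
      using Pb[of x] by blast
  qed
  then have kdef: "k = (GREATEST k. k \<le> n + 1 \<and> P k)" using assms(5) by simp
  have P0: "0 \<le> n + 1 \<and> P 0" by (simp add: P_def)
  have kk: "k \<le> n + 1 \<and> P k" unfolding kdef
    by (rule GreatestI_nat[of _ 0 "n+1"]) (use P0 in auto)
  have kmax: "\<And>j. j \<le> n + 1 \<Longrightarrow> P j \<Longrightarrow> j \<le> k" unfolding kdef
    by (rule Greatest_le_nat[of _ _ "n+1"]) auto
  define D where "D j = \<beta>^j - V \<beta> b j" for j
  have Dk: "D k = tau \<beta> (k mod m)"
    using match[OF sp m r, of k k b] kk unfolding D_def P_def by simp
  have Dge: "\<And>j. j \<le> Suc n \<Longrightarrow> D j \<ge> D k"
    unfolding D_def
    by (rule all_ge[OF sp m r, of "Suc n" b k]) (use tlb kk kmax in \<open>auto simp: P_def\<close>)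
  have Dge2: "\<And>j. D j \<ge> D k"
  proof -
    fix j show "D j \<ge> D k"
    proof (cases "j \<le> Suc n")
      case True then show ?thesis using Dge by simp
    next
      case False
      then have "D j = \<beta>^j - y" "D (Suc n) = \<beta>^(Suc n) - y" using Vb2 unfolding D_def by auto
      moreover have "\<beta>^(Suc n) \<le> \<beta>^j" using False b1' by (intro power_increasing) auto
      ultimately show ?thesis using Dge[of "Suc n"] by simp
    qed
  qed
  have Dpos: "D k > 0"
  proof -
    have "k mod m < m" using m by simp
    then have "tau \<beta> (k mod m) \<noteq> 0" using sp by (simp add: simple_parry_def tau_def)
    then show ?thesis using Dk tau_bounds[of \<beta> "k mod m"] by simp
  qed
  define js where "js = (GREATEST j. j \<le> Suc n \<and> D j = D k)"
  have js: "js \<le> Suc n \<and> D js = D k" unfolding js_def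
    by (rule GreatestI_nat[of _ k "Suc n"]) (use kk in auto)
  have jsmax: "\<And>j. j \<le> Suc n \<Longrightarrow> D j = D k \<Longrightarrow> j \<le> js" unfolding js_def
    by (rule Greatest_le_nat[of _ _ "Suc n"]) auto
  have Dlt: "\<And>i. js < i \<Longrightarrow> i \<le> Suc (Suc n) \<Longrightarrow> D k < D i"
  proof -
    fix i assume i: "js < i" "i \<le> Suc (Suc n)"
    show "D k < D i"
    proof (cases "i \<le> Suc n")
      case True
      then have "D i \<noteq> D k" using jsmax i by fastforce
      then show ?thesis using Dge[OF True] by simp
    next
      case False
      then have ii: "i = Suc (Suc n)" using i by simp
      have "D i = \<beta>^(Suc (Suc n)) - y" "D (Suc n) = \<beta>^(Suc n) - y" using Vb2 ii unfolding D_def by auto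
      moreover have "\<beta>^(Suc n) < \<beta>^(Suc (Suc n))" using b1 by (intro power_strict_increasing) auto
      ultimately show ?thesis using Dge[of "Suc n"] by simp
    qed
  qed
  define e where "e = (\<lambda>i. if i < js then 0 else if i = js then b i + 1 else b i)"
  have Ve: "\<And>i. V \<beta> e i = (if i \<le> js then 0 else V \<beta> b i - V \<beta> b js + \<beta> ^ js)"
    unfolding e_def by (rule V_inc)
  define n' where "n' = (if js = Suc n then Suc n else n)"
  have jsn': "js \<le> n'" and n'le: "n \<le> n'" "n' \<le> Suc n" using js unfolding n'_def by auto
  have zval: "V \<beta> e (Suc n') = y + D k"
  proof -
    have "V \<beta> e (Suc n') = V \<beta> b (Suc n') - V \<beta> b js + \<beta> ^ js" using Ve jsn' by simp
    also have "V \<beta> b (Suc n') = y" using Vb2 n'le by simp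
    finally show ?thesis using js unfolding D_def by simp
  qed
  have tle: "\<forall>i \<le> Suc n'. V \<beta> e i < \<beta> ^ i"
  proof (intro allI impI)
    fix i assume i: "i \<le> Suc n'"
    show "V \<beta> e i < \<beta> ^ i"
    proof (cases "i \<le> js")
      case True then show ?thesis using Ve b0 by simp
    next
      case False
      then have "V \<beta> e i = \<beta>^i - D i + D js" using Ve unfolding D_def by simp
      moreover have "D k < D i" using Dlt False i n'le by simp
      ultimately show ?thesis using js by simp
    qed
  qed
  have lde: "e n' \<noteq> 0 \<or> n' = 0"
  proof (cases "js = Suc n")
    case True then show ?thesis unfolding n'_def e_def by simp
  next
    case False
    then have "n' = n" "js \<le> n" using js unfolding n'_def by auto
    then show ?thesis using lead unfolding e_def b_def by auto
  qed
  have "is_beta_int_expansion \<beta> (y + D k) n' e"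
    using exp_iff[OF b1] lde zval tle by simp
  then have zin: "y + D k \<in> Zbeta \<beta>" by (auto simp: Zbeta_def Zbeta_plus_def)
  have low: "y + D k \<le> w" if w: "w \<in> Zbeta \<beta>" "y < w" for w
  proof -
    have "w \<in> Zbeta_plus \<beta>"
    proof (rule ccontr)
      assume "w \<notin> Zbeta_plus \<beta>"
      then obtain v where "v \<in> Zbeta_plus \<beta>" "w = - v" using w unfolding Zbeta_def by auto
      then have "w \<le> 0" by (auto simp: Zbeta_plus_def is_beta_int_expansion_def)
      then show False using w y0 by simp
    qed
    then obtain nw a where ea: "is_beta_int_expansion \<beta> w nw a" unfolding Zbeta_plus_def by auto
    then have wV: "w = V \<beta> a (Suc nw)" and tla: "\<forall>i\<le>Suc nw. V \<beta> a i < \<beta> ^ i"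
      using exp_iff[OF b1] by blast+
    define a' where "a' = (\<lambda>i. if i \<le> nw then a i else 0)"
    have tla': "\<forall>i. V \<beta> a' i < \<beta> ^ i" unfolding a'_def using ext_tails[OF b1' tla] by blast
    define N where "N = Suc (max n nw)"
    have wN: "V \<beta> a' N = w" unfolding a'_def wV N_def by (rule ext_val) simp
    have yN: "V \<beta> b N = y" unfolding N_def by (rule Vb2) simp
    obtain j where "j < N" "V \<beta> a' N \<ge> V \<beta> b N - V \<beta> b j + \<beta> ^ j"
      using digit_cmp[OF tla' _ b0, of b N] wN yN w by auto
    then have "w \<ge> y + D j" using wN yN unfolding D_def by simp
    then show ?thesis using Dge2[of j] by simp
  qed
  have "beta_succ \<beta> y = y + D k"
    unfolding beta_succ_def
  proof (rule Least_equality)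
    show "y + D k \<in> Zbeta \<beta> \<and> y < y + D k" using zin Dpos by simp
  next
    fix z assume "z \<in> Zbeta \<beta> \<and> y < z"
    then show "y + D k \<le> z" using low by blast
  qed
  then show ?thesis using Dk by (simp add: tau_def)
qed

end
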